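(* Let $p>1$ and $\lambda>0$ be fixed, and let $\phi:(0,+\infty)\times[0,\pi/2]\to[0,+\infty)$ be defined by $$\phi(R,\theta)=2\int_0^1\frac{ds}{\sqrt{\frac{1}{\cos^2\theta}-s^2+\frac{2R^{p-1}\cos^{p-1}\theta}{\lambda(p+1)}\,(1-s^{p+1})}}\quad\text{for }\theta\in[0,\pi/2),\qquad \phi(R,\pi/2)=0.$$ Given $a,b$ with $0<a<b<\pi/2$, there exists $R^*=R^*(a,b)$ such that, for every $R>R^*$: (a) the function $\phi(R,\cdot)$ is increasing in $[a,b]$; (b) there is $\theta^*\in(b,\pi/2)$ at which $\phi(R,\cdot)$ attains its absolute maximum on $[0,\pi/2]$; (c) there exists $\theta_*\in[0,a]$ such that $\phi(R,\theta_* )=\min_{\theta\in[0,a]}\phi(R,\theta)>0=\phi(R,\pi/2)$. *)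

theory Defs
  imports "HOL-Analysis.Analysis"
begin

text \<open>The integral is the Henstock-Kurzweil integral over [0,1] (the integrand is
  nonnegative, so this agrees with the (improper) Lebesgue integral).\<close>
definition phi :: "real \<Rightarrow> real \<Rightarrow> real \<Rightarrow> real \<Rightarrow> real" where
  "phi p lam R \<theta> =
     (if \<theta> = pi / 2 then 0
      else 2 * integral {0..1} (\<lambda>s. 1 / sqrt (1 / (cos \<theta>)\<^sup>2 - s\<^sup>2
              + 2 * R powr (p - 1) * (cos \<theta>) powr (p - 1) / (lam * (p + 1))
                * (1 - s powr (p + 1)))))"

end

theory Submission
  imports Defs
begin
lemma powr_diff_lb:
  fixes q u x y :: real
  assumes q: "q > 0" and u: "0 < u" "u \<le> x" and xy: "x < y" and y1: "y \<le> 1"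
  shows "y powr q - x powr q \<ge> q * min 1 (u powr (q - 1)) * (y - x)"
proof -
  have "\<And>z. x \<le> z \<Longrightarrow> z \<le> y \<Longrightarrow> ((\<lambda>z. z powr q) has_real_derivative q * z powr (q - 1)) (at z)"
    using u by (intro has_real_derivative_powr) auto
  from MVT2[OF xy this] obtain z where z: "x < z" "z < y"
    and eq: "y powr q - x powr q = (y - x) * (q * z powr (q - 1))" by blast
  have "min 1 (u powr (q - 1)) \<le> z powr (q - 1)"
  proof (cases "q - 1 \<ge> 0")
    case True
    then have "u powr (q - 1) \<le> z powr (q - 1)" using u z by (intro powr_mono2) auto
    then show ?thesis by linarith
  next
    case False
    then have "z powr 0 \<le> z powr (q - 1)" using z u y1 by (intro powr_mono') auto
    then have "1 \<le> z powr (q - 1)" using z u by simp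
    then show ?thesis by linarith
  qed
  then have "q * min 1 (u powr (q - 1)) \<le> q * z powr (q - 1)" using q by simp
  then show ?thesis unfolding eq using xy by (simp add: mult.commute mult_left_mono)
qed

lemma inv_sqrt_diff_eq:
  fixes X Y :: real
  assumes "X > 0" "Y > 0"
  shows "1 / sqrt X - 1 / sqrt Y = (Y - X) / (sqrt X * sqrt Y * (sqrt X + sqrt Y))"
proof -
  define x y where "x = sqrt X" and "y = sqrt Y"
  have xy: "x > 0" "y > 0" "X = x^2" "Y = y^2" using assms by (auto simp: x_def y_def)
  have e: "y^2 - x^2 = (y - x) * (x + y)" by (simp add: power2_eq_square algebra_simps)
  have e2: "(y^2 - x^2) / (x * y * (x + y)) = (y - x) / (x * y)"
    unfolding e using xy by (intro mult_divide_mult_cancel_right) auto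
  have "1 / x - 1 / y = (y^2 - x^2) / (x * y * (x + y))"
    unfolding e2 using xy by (simp add: field_simps)
  then show ?thesis using assms by (simp add: x_def y_def)
qed

lemma inv_sqrt_diff_upper:
  fixes X Y m :: real
  assumes m: "m > 0" "m \<le> X" "m \<le> Y" and XY: "X \<le> Y"
  shows "1 / sqrt X - 1 / sqrt Y \<le> (Y - X) / (2 * m * sqrt m)"
proof -
  have sm: "sqrt m > 0" using m by auto
  have sa: "sqrt m \<le> sqrt X" "sqrt m \<le> sqrt Y" using m by auto
  have den: "2 * m * sqrt m \<le> sqrt X * sqrt Y * (sqrt X + sqrt Y)"
  proof -
    have "sqrt m * sqrt m \<le> sqrt X * sqrt Y" using sa sm by (intro mult_mono) auto
    moreover have "2 * sqrt m \<le> sqrt X + sqrt Y" using sa by linarith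
    ultimately have "sqrt m * sqrt m * (2 * sqrt m) \<le> sqrt X * sqrt Y * (sqrt X + sqrt Y)"
      using sm m by (intro mult_mono) auto
    then show ?thesis using m by (simp add: algebra_simps)
  qed
  have "1 / sqrt X - 1 / sqrt Y = (Y - X) / (sqrt X * sqrt Y * (sqrt X + sqrt Y))"
    using m by (intro inv_sqrt_diff_eq) auto
  also have "\<dots> \<le> (Y - X) / (2 * m * sqrt m)"
  proof (rule divide_left_mono[OF den])
    have pX: "sqrt X > 0" "sqrt Y > 0" using sa sm by linarith+
    have pa: "0 < sqrt X * sqrt Y * (sqrt X + sqrt Y)" by (metis pX add_pos_pos mult_pos_pos)
    have pb: "0 < 2 * m * sqrt m" using m sm by simp
    show "0 < sqrt X * sqrt Y * (sqrt X + sqrt Y) * (2 * m * sqrt m)" using mult_pos_pos[OF pa pb] .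
  qed (use XY in simp)
  finally show ?thesis .
qed

lemma inv_sqrt_diff_lower:
  fixes X Y B :: real
  assumes X: "X > 0" and XY: "X \<le> Y" and YB: "Y \<le> B"
  shows "(Y - X) / (2 * B * sqrt B) \<le> 1 / sqrt X - 1 / sqrt Y"
proof -
  have sa: "sqrt X \<le> sqrt B" "sqrt Y \<le> sqrt B" "sqrt X > 0" "sqrt Y > 0" using assms by auto
  have den: "sqrt X * sqrt Y * (sqrt X + sqrt Y) \<le> 2 * B * sqrt B"
  proof -
    have f1: "sqrt X * sqrt Y \<le> sqrt B * sqrt B" using sa by (intro mult_mono) auto
    have f2: "sqrt X + sqrt Y \<le> 2 * sqrt B" using sa by linarith
    have "sqrt X * sqrt Y * (sqrt X + sqrt Y) \<le> sqrt B * sqrt B * (2 * sqrt B)"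
      by (rule mult_mono[OF f1 f2]) (use sa in auto)
    then show ?thesis using X XY YB by (simp add: algebra_simps)
  qed
  have "(Y - X) / (2 * B * sqrt B) \<le> (Y - X) / (sqrt X * sqrt Y * (sqrt X + sqrt Y))"
  proof (rule divide_left_mono[OF den])
    have pa: "0 < sqrt X * sqrt Y * (sqrt X + sqrt Y)" by (metis sa(3,4) add_pos_pos mult_pos_pos)
    have pb: "0 < 2 * B * sqrt B" using X XY YB by simp
    show "0 < 2 * B * sqrt B * (sqrt X * sqrt Y * (sqrt X + sqrt Y))" using mult_pos_pos[OF pb pa] .
  qed (use XY in simp)
  also have "\<dots> = 1 / sqrt X - 1 / sqrt Y"
    using X XY by (intro inv_sqrt_diff_eq[symmetric]) auto
  finally show ?thesis .
qed

lemma h_has_integral: "((\<lambda>s::real. 1 / sqrt (1 - s)) has_integral 2) {0..1}"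
proof -
  have "((\<lambda>s::real. 1 / sqrt (1 - s)) has_integral ((-2) * sqrt (1 - 1) - (-2) * sqrt (1 - 0))) {0..1}"
  proof (rule fundamental_theorem_of_calculus_interior)
    show "continuous_on {0..1::real} (\<lambda>s. (-2) * sqrt (1 - s))"
      by (intro continuous_on_mult continuous_on_const continuous_on_real_sqrt continuous_on_diff continuous_on_id)
    fix x :: real assume x: "x \<in> {0<..<1}"
    have d1: "DERIV (\<lambda>s. 1 - s) x :> 0 - 1" by (rule DERIV_diff[OF DERIV_const DERIV_ident])
    have d2: "DERIV sqrt (1 - x) :> inverse (sqrt (1 - x)) / 2" using x by (intro DERIV_real_sqrt) auto
    have "DERIV (\<lambda>s. sqrt (1 - s)) x :> inverse (sqrt (1 - x)) / 2 * (0 - 1)"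
      using DERIV_chain2[OF d2 d1] .
    then have "((\<lambda>s. (-2) * sqrt (1 - s)) has_real_derivative (-2) * (inverse (sqrt (1 - x)) / 2 * (0 - 1))) (at x)"
      by (intro DERIV_cmult)
    moreover have "(-2) * (inverse (sqrt (1 - x)) / 2 * (0 - 1)) = 1 / sqrt (1 - x)"
      by (simp add: inverse_eq_divide)
    ultimately show "((\<lambda>s. (-2) * sqrt (1 - s)) has_vector_derivative 1 / sqrt (1 - x)) (at x)"
      unfolding has_real_derivative_iff_has_vector_derivative[symmetric] by simp
  qed simp
  then show ?thesis by simp
qed

definition Kc :: "real \<Rightarrow> real \<Rightarrow> real \<Rightarrow> real" where
  "Kc p lam R = 2 * R powr (p - 1) / (lam * (p + 1))"

definition Aa :: "real \<Rightarrow> real \<Rightarrow> real \<Rightarrow> real \<Rightarrow> real \<Rightarrow> real" where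
  "Aa p lam R \<theta> s = 1 / (cos \<theta>)\<^sup>2 - s\<^sup>2 + Kc p lam R * (cos \<theta>) powr (p - 1) * (1 - s powr (p + 1))"

lemma phi_eq:
  assumes "\<theta> \<noteq> pi / 2"
  shows "phi p lam R \<theta> = 2 * integral {0..1} (\<lambda>s. 1 / sqrt (Aa p lam R \<theta> s))"
proof -
  have "\<And>c. 2 * R powr (p - 1) * c / (lam * (p + 1)) = Kc p lam R * c"
    by (simp add: Kc_def)
  then show ?thesis using assms unfolding phi_def Aa_def by simp
qed

lemma spow:
  fixes p s :: real
  assumes "p > 1" "0 \<le> s" "s \<le> 1"
  shows "0 \<le> s powr (p + 1)" "s powr (p + 1) \<le> s"
proof -
  show "0 \<le> s powr (p + 1)" by simp
  have "s powr (p + 1) \<le> s powr 1" using assms by (intro powr_mono') auto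
  then show "s powr (p + 1) \<le> s" using assms by simp
qed

lemma Kc_pos: "p > 1 \<Longrightarrow> lam > 0 \<Longrightarrow> R > 0 \<Longrightarrow> Kc p lam R > 0"
  unfolding Kc_def by simp

lemma cos_facts:
  fixes \<theta> :: real
  assumes "0 \<le> \<theta>" "\<theta> < pi / 2"
  shows "0 < cos \<theta>" "cos \<theta> \<le> 1" "1 \<le> 1 / (cos \<theta>)\<^sup>2"
proof -
  show c0: "0 < cos \<theta>" using assms by (intro cos_gt_zero_pi) auto
  show c1: "cos \<theta> \<le> 1" by simp
  have "(cos \<theta>)\<^sup>2 \<le> 1" using c0 c1 by (simp add: power_le_one)
  then show "1 \<le> 1 / (cos \<theta>)\<^sup>2" using c0 by simp
qed

lemma A_lower:
  assumes p: "p > 1" and K: "Kc p lam R \<ge> 0" and th: "0 \<le> \<theta>" "\<theta> < pi / 2" and s: "0 \<le> s" "s \<le> 1"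
  shows "1 / (cos \<theta>)\<^sup>2 - s\<^sup>2 \<le> Aa p lam R \<theta> s" "1 - s \<le> 1 / (cos \<theta>)\<^sup>2 - s\<^sup>2"
    "Kc p lam R * (cos \<theta>) powr (p - 1) * (1 - s) \<le> Aa p lam R \<theta> s"
proof -
  have sp: "0 \<le> s powr (p + 1)" "s powr (p + 1) \<le> s" using spow[OF p s] by auto
  have t: "0 \<le> Kc p lam R * (cos \<theta>) powr (p - 1) * (1 - s powr (p + 1))"
    using K sp s by (intro mult_nonneg_nonneg) auto
  then show "1 / (cos \<theta>)\<^sup>2 - s\<^sup>2 \<le> Aa p lam R \<theta> s" unfolding Aa_def by simp
  have ss: "s\<^sup>2 \<le> s" using s by (simp add: power2_eq_square mult_left_le_one_le)
  show "1 - s \<le> 1 / (cos \<theta>)\<^sup>2 - s\<^sup>2" using cos_facts[OF th] ss by linarith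
  have "Kc p lam R * (cos \<theta>) powr (p - 1) * (1 - s) \<le> Kc p lam R * (cos \<theta>) powr (p - 1) * (1 - s powr (p + 1))"
    using K sp by (intro mult_left_mono) auto
  moreover have "0 \<le> 1 / (cos \<theta>)\<^sup>2 - s\<^sup>2" using cos_facts[OF th] ss s by linarith
  ultimately show "Kc p lam R * (cos \<theta>) powr (p - 1) * (1 - s) \<le> Aa p lam R \<theta> s"
    unfolding Aa_def by linarith
qed

lemma A_upper:
  assumes p: "p > 1" and K: "Kc p lam R \<ge> 0" and s: "0 \<le> s" "s \<le> 1"
  shows "Aa p lam R \<theta> s \<le> 1 / (cos \<theta>)\<^sup>2 + Kc p lam R * (cos \<theta>) powr (p - 1)"
proof -
  have sp: "0 \<le> s powr (p + 1)" using spow[OF p s] by auto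
  have "Kc p lam R * (cos \<theta>) powr (p - 1) * (1 - s powr (p + 1)) \<le> Kc p lam R * (cos \<theta>) powr (p - 1) * 1"
    using K sp by (intro mult_left_mono) auto
  moreover have "0 \<le> s\<^sup>2" by simp
  ultimately show ?thesis unfolding Aa_def by linarith
qed

lemma A_pos:
  assumes p: "p > 1" and K: "Kc p lam R \<ge> 0" and th: "0 \<le> \<theta>" "\<theta> < pi / 2" and s: "0 \<le> s" "s < 1"
  shows "0 < Aa p lam R \<theta> s"
  using A_lower[OF p K th, of s] s by linarith

lemma spow_cont:
  assumes "p > 1" "S \<subseteq> {0..}"
  shows "continuous_on S (\<lambda>s::real. s powr (p + 1))"
  using assms by (intro continuous_on_powr' continuous_on_id continuous_on_const) auto

lemma F_cont:
  assumes p: "p > 1" and S: "S \<subseteq> {0..1}" and pos: "\<And>s. s \<in> S \<Longrightarrow> 0 < Aa p lam R \<theta> s"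
  shows "continuous_on S (\<lambda>s. 1 / sqrt (Aa p lam R \<theta> s))"
proof -
  have c1: "continuous_on S (\<lambda>s::real. s powr (p + 1))" using S p by (intro spow_cont) auto
  have "continuous_on S (Aa p lam R \<theta>)"
    unfolding Aa_def
    by (intro continuous_on_diff continuous_on_add continuous_on_mult continuous_on_const
        continuous_on_power continuous_on_id c1)
  moreover have "\<forall>s\<in>S. sqrt (Aa p lam R \<theta> s) \<noteq> 0"
    using pos by (metis order_less_irrefl real_sqrt_eq_zero_cancel_iff)
  ultimately show ?thesis
    by (intro continuous_on_divide continuous_on_const continuous_on_real_sqrt)
qed

lemma lebesgue_Ico: "{0..<1::real} \<in> sets lebesgue"
  by simp

lemma h_int_Ico: "(\<lambda>s::real. 1 / sqrt (1 - s)) integrable_on {0..<1}"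
proof (rule integrable_spike_set[OF has_integral_integrable[OF h_has_integral]])
  show "negligible {x \<in> {0..1::real} - {0..<1}. 1 / sqrt (1 - x) \<noteq> 0}"
    by (rule negligible_subset[of "{1}"]) auto
  show "negligible {x \<in> {0..<1::real} - {0..1}. 1 / sqrt (1 - x) \<noteq> 0}"
    by (rule negligible_subset[of "{}"]) auto
qed

context
  fixes p lam R :: real
  assumes p: "p > 1" and lam: "lam > 0" and R: "R > 0"
begin

lemma K0: "Kc p lam R \<ge> 0" using Kc_pos[OF p lam R] by simp

lemma F_bound:
  assumes th: "0 \<le> \<theta>" "\<theta> < pi / 2" and s: "0 \<le> s" "s < 1"
  shows "norm (1 / sqrt (Aa p lam R \<theta> s)) \<le> 1 / sqrt (1 - s)"
proof -
  have "1 - s \<le> Aa p lam R \<theta> s" using A_lower[OF p K0 th, of s] s by linarith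
  moreover have "0 < 1 - s" using s by simp
  ultimately show ?thesis by (simp add: frac_le)
qed

lemma F_int_Ico:
  assumes th: "0 \<le> \<theta>" "\<theta> < pi / 2"
  shows "(\<lambda>s. 1 / sqrt (Aa p lam R \<theta> s)) integrable_on {0..<1}"
proof (rule measurable_bounded_by_integrable_imp_integrable[OF _ h_int_Ico _ lebesgue_Ico])
  show "(\<lambda>s. 1 / sqrt (Aa p lam R \<theta> s)) \<in> borel_measurable (lebesgue_on {0..<1})"
    by (intro continuous_imp_measurable_on_sets_lebesgue[OF _ lebesgue_Ico] F_cont p)
       (auto intro: A_pos[OF p K0 th])
  show "norm (1 / sqrt (Aa p lam R \<theta> s)) \<le> 1 / sqrt (1 - s)" if "s \<in> {0..<1}" for s
    using that by (intro F_bound th) auto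
qed

lemma F_int:
  assumes th: "0 \<le> \<theta>" "\<theta> < pi / 2"
  shows "(\<lambda>s. 1 / sqrt (Aa p lam R \<theta> s)) integrable_on {0..1}"
    "integral {0..1} (\<lambda>s. 1 / sqrt (Aa p lam R \<theta> s)) = integral {0..<1} (\<lambda>s. 1 / sqrt (Aa p lam R \<theta> s))"
proof -
  have n1: "negligible {x \<in> {0..1::real} - {0..<1}. 1 / sqrt (Aa p lam R \<theta> x) \<noteq> 0}"
    by (rule negligible_subset[of "{1}"]) auto
  have n2: "negligible {x \<in> {0..<1::real} - {0..1}. 1 / sqrt (Aa p lam R \<theta> x) \<noteq> 0}"
    by (rule negligible_subset[of "{}"]) auto
  show "(\<lambda>s. 1 / sqrt (Aa p lam R \<theta> s)) integrable_on {0..1}"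
    by (rule integrable_spike_set[OF F_int_Ico[OF th] n2 n1])
  show "integral {0..1} (\<lambda>s. 1 / sqrt (Aa p lam R \<theta> s)) = integral {0..<1} (\<lambda>s. 1 / sqrt (Aa p lam R \<theta> s))"
    by (rule integral_spike_set[OF n1 n2])
qed

lemma F_isCont:
  assumes th: "0 \<le> a" "a < pi / 2" and s: "0 \<le> s" "s < 1"
  shows "isCont (\<lambda>\<theta>. 1 / sqrt (Aa p lam R \<theta> s)) a"
proof -
  have ca: "0 < cos a" using cos_facts[OF th] by simp
  have Ap: "0 < Aa p lam R a s" using A_pos[OF p K0 th s] .
  have c1: "isCont (\<lambda>\<theta>. (cos \<theta>) powr (p - 1)) a"
    using ca by (intro continuous_intros) auto
  have "isCont (\<lambda>\<theta>. Aa p lam R \<theta> s) a"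
    unfolding Aa_def using ca c1 by (intro continuous_intros) auto
  then show ?thesis using Ap
    by (intro continuous_intros) auto
qed

lemma phi_cont_Ico:
  "continuous_on {0..<pi/2} (\<lambda>\<theta>. integral {0..<1} (\<lambda>s. 1 / sqrt (Aa p lam R \<theta> s)))"
  unfolding continuous_on_sequentially
proof (intro allI ballI impI)
  fix x :: "nat \<Rightarrow> real" and a
  assume a: "a \<in> {0..<pi/2}" and x: "(\<forall>n. x n \<in> {0..<pi/2}) \<and> x \<longlonglongrightarrow> a"
  have "(\<lambda>k. integral {0..<1} (\<lambda>s. 1 / sqrt (Aa p lam R (x k) s)))
          \<longlonglongrightarrow> integral {0..<1} (\<lambda>s. 1 / sqrt (Aa p lam R a s))"
  proof (rule dominated_convergence(2)[OF _ h_int_Ico])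
    show "(\<lambda>s. 1 / sqrt (Aa p lam R (x k) s)) integrable_on {0..<1}" for k
      using x by (intro F_int_Ico) auto
    show "norm (1 / sqrt (Aa p lam R (x k) s)) \<le> 1 / sqrt (1 - s)" if "s \<in> {0..<1}" for k s
      using x that by (intro F_bound) auto
    show "(\<lambda>k. 1 / sqrt (Aa p lam R (x k) s)) \<longlonglongrightarrow> 1 / sqrt (Aa p lam R a s)" if "s \<in> {0..<1}" for s
      using isCont_tendsto_compose[OF F_isCont x[THEN conjunct2]] a that by auto
  qed
  then show "((\<lambda>\<theta>. integral {0..<1} (\<lambda>s. 1 / sqrt (Aa p lam R \<theta> s))) \<circ> x) \<longlonglongrightarrow>
     integral {0..<1} (\<lambda>s. 1 / sqrt (Aa p lam R a s))" by (simp add: o_def)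
qed

lemma phi_cont:
  assumes "x < pi / 2"
  shows "continuous_on {0..x} (phi p lam R)"
proof -
  have "continuous_on {0..x} (\<lambda>\<theta>. 2 * integral {0..<1} (\<lambda>s. 1 / sqrt (Aa p lam R \<theta> s)))"
    using assms by (intro continuous_on_mult continuous_on_const continuous_on_subset[OF phi_cont_Ico]) auto
  moreover have "phi p lam R \<theta> = 2 * integral {0..<1} (\<lambda>s. 1 / sqrt (Aa p lam R \<theta> s))"
    if "\<theta> \<in> {0..x}" for \<theta>
    using that assms by (subst phi_eq) (auto simp: F_int)
  ultimately show ?thesis using continuous_on_eq by (metis (no_types, lifting))
qed

end

lemma int_lb:
  fixes f :: "real \<Rightarrow> real"
  assumes xy: "x \<le> y" and f: "f integrable_on {x..y}" and le: "\<And>s. s \<in> {x..y} \<Longrightarrow> c \<le> f s"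
  shows "(y - x) * c \<le> integral {x..y} f"
proof -
  have "integral {x..y} (\<lambda>_. c) \<le> integral {x..y} f"
    by (rule integral_le[OF integrable_const_ivl f le])
  then show ?thesis using xy by simp
qed

lemma E_le_MD:
  fixes q u x y :: real
  assumes q: "q > 0" and u: "0 < u" "u \<le> x" and xy: "x < y" and y1: "y \<le> 1"
  shows "1 / x\<^sup>2 - 1 / y\<^sup>2 \<le> (2 / (u^4 * (q * min 1 (u powr (q - 1))))) * (y powr q - x powr q)"
proof -
  define L where "L = q * min 1 (u powr (q - 1))"
  have L: "L > 0" unfolding L_def using q u by auto
  have D: "L * (y - x) \<le> y powr q - x powr q" using powr_diff_lb[OF q u xy y1] by (simp add: L_def mult.commute mult.left_commute)
  have x0: "x > 0" using u by simp
  have "1 / x\<^sup>2 - 1 / y\<^sup>2 = (y - x) * (y + x) / (x\<^sup>2 * y\<^sup>2)"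
    using x0 xy by (simp add: field_simps power2_eq_square)
  also have "\<dots> \<le> (y - x) * 2 / u^4"
  proof -
    have "(y - x) * (y + x) \<le> (y - x) * 2" using xy y1 by (intro mult_left_mono) auto
    moreover have "u^4 \<le> x\<^sup>2 * y\<^sup>2"
    proof -
      have "u^2 \<le> x^2" "u^2 \<le> y^2" using u xy by (auto intro!: power_mono)
      then have "u^2 * u^2 \<le> x^2 * y^2" by (intro mult_mono) auto
      then show ?thesis by (simp add: power4_eq_xxxx power2_eq_square mult.assoc)
    qed
    ultimately show ?thesis using u xy
      by (intro frac_le) auto
  qed
  also have "\<dots> \<le> 2 / (u^4 * L) * (y powr q - x powr q)"
  proof -
    have "(y - x) * 2 / u^4 = 2 / (u^4 * L) * (L * (y - x))" using L u by (simp add: field_simps)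
    also have "\<dots> \<le> 2 / (u^4 * L) * (y powr q - x powr q)" using D L u by (intro mult_left_mono) auto
    finally show ?thesis .
  qed
  finally show ?thesis unfolding L_def .
qed

lemma final_arith:
  fixes D K M B m E :: real
  assumes D: "D > 0" and K: "K > 0" and M: "M > 0" and m: "m > 0" and B: "B > 0" "B \<le> 2 * K"
    and ED: "E \<le> M * D" and K3: "32 * M^2 / (m * sqrt m) < sqrt K"
  shows "(1/2) * (K * D / 4 / (2 * B * sqrt B)) + (M / K) * (- (E / (2 * m * sqrt m))) > 0"
proof -
  have sK: "sqrt K > 0" "sqrt K * sqrt K = K" using K by auto
  have sm: "sqrt m > 0" using m by auto
  have msm: "m * sqrt m > 0" using m sm by simp
  have h1: "B * sqrt B \<le> 4 * K * sqrt K"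
  proof -
    have "sqrt B \<le> sqrt (2 * K)" using B by simp
    also have "\<dots> = sqrt 2 * sqrt K" by (simp add: real_sqrt_mult)
    also have "\<dots> \<le> 2 * sqrt K"
    proof -
      have "sqrt 2 \<le> sqrt (2^2)" by (intro real_sqrt_le_mono) simp
      then have "sqrt 2 \<le> 2" by simp
      then show ?thesis using sK by (intro mult_right_mono) auto
    qed
    finally have "sqrt B \<le> 2 * sqrt K" .
    then have "B * sqrt B \<le> (2 * K) * (2 * sqrt K)" using B by (intro mult_mono) auto
    then show ?thesis by simp
  qed
  have h2: "D / (32 * sqrt K) \<le> K * D / 4 / (2 * B * sqrt B)"
  proof -
    have "K * D / 4 / (2 * B * sqrt B) = K * D / (8 * (B * sqrt B))" by (simp add: field_simps)
    moreover have "K * D / (8 * (4 * K * sqrt K)) \<le> K * D / (8 * (B * sqrt B))"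
      using h1 B K D by (intro divide_left_mono) (auto intro!: mult_pos_pos)
    moreover have "K * D / (8 * (4 * K * sqrt K)) = D / (32 * sqrt K)" using K by (simp add: field_simps)
    ultimately show ?thesis by simp
  qed
  have h3: "(M / K) * (E / (2 * m * sqrt m)) \<le> (M / K) * (M * D / (2 * m * sqrt m))"
    using ED M K msm by (intro mult_left_mono divide_right_mono) auto
  have X: "32 * M^2 < sqrt K * (m * sqrt m)" using K3 msm by (simp add: pos_divide_less_eq)
  have X2: "32 * M^2 * sqrt K < K * (m * sqrt m)"
  proof -
    have "32 * M^2 * sqrt K < sqrt K * (m * sqrt m) * sqrt K" using X sK by (intro mult_strict_right_mono) auto
    also have "\<dots> = K * (m * sqrt m)" using sK by (simp add: algebra_simps)
    finally show ?thesis .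
  qed
  have h4: "(M / K) * (M * D / (2 * m * sqrt m)) < (1/2) * (D / (32 * sqrt K))"
  proof -
    have l: "(M / K) * (M * D / (2 * m * sqrt m)) = D * (M^2 / (2 * K * (m * sqrt m)))"
      by (simp add: field_simps power2_eq_square)
    have r: "(1/2) * (D / (32 * sqrt K)) = D * (1 / (64 * sqrt K))" by simp
    have "M^2 / (2 * K * (m * sqrt m)) < 1 / (64 * sqrt K)"
      using X2 sK msm K by (simp add: field_simps)
    then show ?thesis unfolding l r using D by (intro mult_strict_left_mono) auto
  qed
  have "(1/2) * (D / (32 * sqrt K)) \<le> (1/2) * (K * D / 4 / (2 * B * sqrt B))" using h2 by simp
  then show ?thesis using h3 h4 by linarith
qed

lemma powr_le1: "0 \<le> (x::real) \<Longrightarrow> x \<le> 1 \<Longrightarrow> 0 \<le> q \<Longrightarrow> x powr q \<le> 1"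
  using powr_mono2[of q x 1] by simp

lemma phi_strict:
  fixes p lam R a t0 \<theta>1 \<theta>2 :: real
  assumes p: "p > 1" and lam: "lam > 0" and R: "R > 0"
  assumes a: "0 < a" and t0: "t0 < pi/2" and th: "a \<le> \<theta>1" "\<theta>1 < \<theta>2" "\<theta>2 \<le> t0"
  and K1: "4 * (2 / ((cos t0)^4 * ((p - 1) * min 1 ((cos t0) powr (p - 1 - 1))))) \<le> Kc p lam R"
          "1 / (cos t0)^2 \<le> Kc p lam R"
          "32 * (2 / ((cos t0)^4 * ((p - 1) * min 1 ((cos t0) powr (p - 1 - 1)))))^2
              / ((1 / (cos a)^2 - 1) * sqrt (1 / (cos a)^2 - 1)) < sqrt (Kc p lam R)"
  shows "phi p lam R \<theta>1 < phi p lam R \<theta>2"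
proof -
  define u v K where "u = cos t0" and "v = cos a" and "K = Kc p lam R"
  define M where "M = 2 / (u^4 * ((p - 1) * min 1 (u powr (p - 1 - 1))))"
  define m where "m = 1 / v^2 - 1"
  have K1': "4 * M \<le> K" "1 / u^2 \<le> K" "32 * M^2 / (m * sqrt m) < sqrt K"
    using K1 unfolding u_def v_def K_def M_def m_def by auto
  define c1 c2 where "c1 = cos \<theta>1" and "c2 = cos \<theta>2"
  have q: "p - 1 > 0" using p by simp
  have pi2: "pi / 2 < pi" by simp
  have hu: "0 < u" unfolding u_def using a th t0 by (intro cos_gt_zero_pi) auto
  have uc2: "u \<le> c2" unfolding u_def c2_def using a th t0 by (subst cos_mono_le_eq) auto
  have c21: "c2 < c1" unfolding c1_def c2_def using a th t0 by (intro cos_monotone_0_pi) auto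
  have c1v: "c1 \<le> v" unfolding v_def c1_def using a th t0 by (subst cos_mono_le_eq) auto
  have v1: "v < 1" unfolding v_def using cos_monotone_0_pi[of 0 a] a t0 th by simp
  have v0: "0 < v" using hu uc2 c21 c1v by simp
  have c2p: "0 < c2" and c1p: "0 < c1" using hu uc2 c21 by auto
  have Kp: "K > 0" unfolding K_def using Kc_pos[OF p lam R] .
  have Mp: "M > 0" unfolding M_def using hu q by (auto intro!: divide_pos_pos mult_pos_pos)
  have mp: "m > 0"
  proof -
    have "v * v < 1 * 1" using v0 v1 by (intro mult_strict_mono) auto
    then have "v^2 < 1" by (simp add: power2_eq_square)
    then have "1 < 1 / v^2" using v0 by simp
    then show ?thesis unfolding m_def by simp
  qed
  define E D where "E = 1 / c2^2 - 1 / c1^2" and "D = c1 powr (p - 1) - c2 powr (p - 1)"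
  have ED: "E \<le> M * D" unfolding E_def D_def M_def
    using E_le_MD[OF q hu uc2 c21] c1v v1 by simp
  have Dp: "D > 0" unfolding D_def using q hu uc2 c21 by (simp add: powr_less_mono2)
  have E0: "E \<ge> 0"
  proof -
    have "c2^2 \<le> c1^2" using c21 hu uc2 by (intro power_mono) auto
    then have "1 / c1^2 \<le> 1 / c2^2" using c1p c2p by (intro divide_left_mono) auto
    then show ?thesis unfolding E_def by simp
  qed
  define A1 A2 where "A1 = Aa p lam R \<theta>1" and "A2 = Aa p lam R \<theta>2"
  have th1: "0 \<le> \<theta>1" "\<theta>1 < pi / 2" using a th t0 by auto
  have th2: "0 \<le> \<theta>2" "\<theta>2 < pi / 2" using a th t0 by auto
  have diff: "A1 s - A2 s = K * D * (1 - s powr (p + 1)) - E" for s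
    unfolding A1_def A2_def Aa_def K_def D_def E_def c1_def c2_def by (simp add: algebra_simps)
  have K0: "Kc p lam R \<ge> 0" using Kp K_def by simp
  have Am: "m \<le> A1 s" "m \<le> A2 s" if "0 \<le> s" "s \<le> 1" for s
  proof -
    have s2: "s^2 \<le> 1" using that by (simp add: power_le_one)
    have "1 / v^2 \<le> 1 / c1^2" "1 / v^2 \<le> 1 / c2^2"
      using c1v c21 c1p c2p v0 by (auto intro!: divide_left_mono power_mono)
    then show "m \<le> A1 s" "m \<le> A2 s"
      using A_lower(1)[OF p K0 th1 that] A_lower(1)[OF p K0 th2 that] s2
      unfolding m_def A1_def A2_def c1_def c2_def by linarith+
  qed
  define B where "B = 1 / u^2 + K"
  have AB: "A1 s \<le> B" "A2 s \<le> B" if "0 \<le> s" "s \<le> 1" for s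
  proof -
    have cc: "c1 powr (p - 1) \<le> 1" "c2 powr (p - 1) \<le> 1"
      using c1v v1 c21 hu uc2 q by (auto intro!: powr_le1)
    have "1 / c1^2 \<le> 1 / u^2" "1 / c2^2 \<le> 1 / u^2"
      using c21 hu uc2 c1p c2p by (auto intro!: divide_left_mono power_mono)
    moreover have "K * c1 powr (p - 1) \<le> K" "K * c2 powr (p - 1) \<le> K"
      using cc Kp by (auto intro: mult_left_le)
    ultimately show "A1 s \<le> B" "A2 s \<le> B"
      using A_upper[OF p K0 that, of \<theta>1] A_upper[OF p K0 that, of \<theta>2]
      unfolding B_def A1_def A2_def c1_def c2_def K_def by linarith+
  qed
  have Bp: "B > 0" unfolding B_def using Kp hu by (simp add: add_pos_pos)
  have B2K: "B \<le> 2 * K" unfolding B_def using K1' by simp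
  define \<Delta> where "\<Delta> = (\<lambda>s. 1 / sqrt (A2 s) - 1 / sqrt (A1 s))"
  define P where "P = K * D / 4 / (2 * B * sqrt B)"
  define t where "t = 1 - M / K"
  have MK: "M / K \<le> 1 / 4" using K1' Kp by (simp add: divide_simps)
  have t12: "1 / 2 \<le> t" "t \<le> 1" unfolding t_def using MK Mp Kp by auto
  have sp: "s powr (p + 1) \<le> s" "0 \<le> s powr (p + 1)" if "0 \<le> s" "s \<le> 1" for s
    using spow[OF p that] by auto
  have KD0: "K * D \<ge> 0" using Kp Dp by simp
  have P1: "P \<le> \<Delta> s" if s: "s \<in> {0..1/2}" for s
  proof -
    have s01: "0 \<le> s" "s \<le> 1" using s by auto
    have "1 / 2 \<le> 1 - s powr (p + 1)" using sp[OF s01] s by auto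
    then have "K * D * (1 / 2) \<le> K * D * (1 - s powr (p + 1))" using KD0 by (intro mult_left_mono) auto
    moreover have "E \<le> K * D / 4"
    proof -
      have "M * D \<le> (K / 4) * D" using K1' Dp by (intro mult_right_mono) auto
      then show ?thesis using ED by simp
    qed
    ultimately have ge: "K * D / 4 \<le> A1 s - A2 s" using diff[of s] by linarith
    have A2p: "A2 s > 0" using Am(2)[OF s01] mp by linarith
    have "(A1 s - A2 s) / (2 * B * sqrt B) \<le> \<Delta> s"
      unfolding \<Delta>_def using ge KD0 AB[OF s01] A2p by (intro inv_sqrt_diff_lower) auto
    moreover have "P \<le> (A1 s - A2 s) / (2 * B * sqrt B)"
      unfolding P_def using ge Bp by (intro divide_right_mono) auto
    ultimately show ?thesis by linarith
  qed
  have P2: "0 \<le> \<Delta> s" if s: "s \<in> {1/2..t}" for s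
  proof -
    have s01: "0 \<le> s" "s \<le> 1" using s t12 by auto
    have "M / K \<le> 1 - s powr (p + 1)" using sp[OF s01] s unfolding t_def by auto
    then have "K * D * (M / K) \<le> K * D * (1 - s powr (p + 1))" using KD0 by (intro mult_left_mono) auto
    moreover have "K * D * (M / K) = M * D" using Kp by simp
    ultimately have ge: "A2 s \<le> A1 s" using diff[of s] ED by linarith
    have A2p: "A2 s > 0" using Am(2)[OF s01] mp by linarith
    have "sqrt (A2 s) \<le> sqrt (A1 s)" using ge by simp
    then have "1 / sqrt (A1 s) \<le> 1 / sqrt (A2 s)" using A2p by (intro divide_left_mono) auto
    then show ?thesis unfolding \<Delta>_def by simp
  qed
  have P3: "- (E / (2 * m * sqrt m)) \<le> \<Delta> s" if s: "s \<in> {t..1}" for s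
  proof -
    have s01: "0 \<le> s" "s \<le> 1" using s t12 by auto
    have Eq: "0 \<le> E / (2 * m * sqrt m)" using E0 mp by simp
    show ?thesis
    proof (cases "A2 s \<le> A1 s")
      case True
      have A2p: "A2 s > 0" using Am(2)[OF s01] mp by linarith
      have "sqrt (A2 s) \<le> sqrt (A1 s)" using True by simp
      then have "1 / sqrt (A1 s) \<le> 1 / sqrt (A2 s)" using A2p by (intro divide_left_mono) auto
      then show ?thesis unfolding \<Delta>_def using Eq by simp
    next
      case False
      have "1 / sqrt (A1 s) - 1 / sqrt (A2 s) \<le> (A2 s - A1 s) / (2 * m * sqrt m)"
        using False Am[OF s01] mp by (intro inv_sqrt_diff_upper) auto
      moreover have "(A2 s - A1 s) / (2 * m * sqrt m) \<le> E / (2 * m * sqrt m)"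
      proof -
        have "0 \<le> K * D * (1 - s powr (p + 1))" using KD0 sp[OF s01] s01 by auto
        then have "A2 s - A1 s \<le> E" using diff[of s] by linarith
        then show ?thesis using mp by (intro divide_right_mono) auto
      qed
      ultimately show ?thesis unfolding \<Delta>_def by linarith
    qed
  qed
  have i1: "(\<lambda>s. 1 / sqrt (A1 s)) integrable_on {0..1}" unfolding A1_def using F_int(1)[OF p lam R th1] .
  have i2: "(\<lambda>s. 1 / sqrt (A2 s)) integrable_on {0..1}" unfolding A2_def using F_int(1)[OF p lam R th2] .
  have iD: "\<Delta> integrable_on {0..1}" unfolding \<Delta>_def using integrable_diff[OF i2 i1] .
  have iD1: "\<Delta> integrable_on {1/2..1}" by (rule integrable_on_subinterval[OF iD]) auto
  have split: "integral {0..1} \<Delta> = integral {0..1/2} \<Delta> + integral {1/2..t} \<Delta> + integral {t..1} \<Delta>"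
  proof -
    have s1: "integral {0..1/2} \<Delta> + integral {1/2..1} \<Delta> = integral {0..1} \<Delta>"
      by (rule Henstock_Kurzweil_Integration.integral_combine[OF _ _ iD]) auto
    have s2: "integral {1/2..t} \<Delta> + integral {t..1} \<Delta> = integral {1/2..1} \<Delta>"
      by (rule Henstock_Kurzweil_Integration.integral_combine[OF t12 iD1])
    show ?thesis using s1 s2 by simp
  qed
  have I1: "(1/2 - 0) * P \<le> integral {0..1/2} \<Delta>"
    by (rule int_lb) (auto intro: P1 integrable_on_subinterval[OF iD])
  have I2: "(t - 1/2) * 0 \<le> integral {1/2..t} \<Delta>"
    using t12 by (intro int_lb) (auto intro: P2 integrable_on_subinterval[OF iD])
  have I3: "(1 - t) * (- (E / (2 * m * sqrt m))) \<le> integral {t..1} \<Delta>"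
    using t12 by (intro int_lb) (auto intro: P3 integrable_on_subinterval[OF iD])
  have pos: "(1/2) * P + (M / K) * (- (E / (2 * m * sqrt m))) > 0"
    unfolding P_def by (rule final_arith[OF Dp Kp Mp mp Bp B2K ED K1'(3)])
  have "1 - t = M / K" unfolding t_def by simp
  then have "integral {0..1} \<Delta> > 0" using split I1 I2 I3 pos by simp
  moreover have "integral {0..1} \<Delta> = integral {0..1} (\<lambda>s. 1 / sqrt (A2 s)) - integral {0..1} (\<lambda>s. 1 / sqrt (A1 s))"
    unfolding \<Delta>_def by (rule integral_diff[OF i2 i1])
  moreover have "phi p lam R \<theta>1 = 2 * integral {0..1} (\<lambda>s. 1 / sqrt (A1 s))"
    unfolding A1_def using th1 by (intro phi_eq) auto
  moreover have "phi p lam R \<theta>2 = 2 * integral {0..1} (\<lambda>s. 1 / sqrt (A2 s))"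
    unfolding A2_def using th2 by (intro phi_eq) auto
  ultimately show ?thesis by simp
qed

lemma h_int_Ico_val: "integral {0..<1::real} (\<lambda>s. 1 / sqrt (1 - s)) = 2"
proof -
  have "integral {0..<1::real} (\<lambda>s. 1 / sqrt (1 - s)) = integral {0..1} (\<lambda>s. 1 / sqrt (1 - s))"
  proof (rule integral_spike_set)
    show "negligible {x \<in> {0..<1::real} - {0..1}. 1 / sqrt (1 - x) \<noteq> 0}"
      by (rule negligible_subset[of "{}"]) auto
    show "negligible {x \<in> {0..1::real} - {0..<1}. 1 / sqrt (1 - x) \<noteq> 0}"
      by (rule negligible_subset[of "{1}"]) auto
  qed
  also have "\<dots> = 2" using h_has_integral by (rule integral_unique)
  finally show ?thesis .
qed

context
  fixes p lam R :: real
  assumes p: "p > 1" and lam: "lam > 0" and R: "R > 0"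
begin

lemma K0': "Kc p lam R \<ge> 0" using Kc_pos[OF p lam R] by simp


lemma phi_lower:
  assumes th: "0 \<le> \<theta>" "\<theta> < pi / 2"
  shows "1 / sqrt (1 / (cos \<theta>)\<^sup>2 + Kc p lam R * (cos \<theta>) powr (p - 1)) \<le> phi p lam R \<theta>"
proof -
  define c where "c = 1 / sqrt (1 / (cos \<theta>)\<^sup>2 + Kc p lam R * (cos \<theta>) powr (p - 1))"
  define f where "f = (\<lambda>s. 1 / sqrt (Aa p lam R \<theta> s))"
  have iF: "f integrable_on {0..1}" unfolding f_def using F_int(1)[OF p lam R th] .
  have s1: "integral {0..1/2} f + integral {1/2..1} f = integral {0..1} f"
    by (rule Henstock_Kurzweil_Integration.integral_combine[OF _ _ iF]) auto
  have I1: "(1/2 - 0) * c \<le> integral {0..1/2} f"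
  proof (rule int_lb)
    show "f integrable_on {0..1/2}" by (rule integrable_on_subinterval[OF iF]) auto
    fix s assume s: "s \<in> {0..1/2::real}"
    have "0 < Aa p lam R \<theta> s" using s by (intro A_pos[OF p K0' th]) auto
    moreover have "Aa p lam R \<theta> s \<le> 1 / (cos \<theta>)\<^sup>2 + Kc p lam R * (cos \<theta>) powr (p - 1)"
      using s by (intro A_upper[OF p K0']) auto
    ultimately show "c \<le> f s" unfolding c_def f_def by (intro divide_left_mono) auto
  qed simp
  have I2: "(1 - 1/2) * 0 \<le> integral {1/2..1} f"
  proof (rule int_lb)
    show "f integrable_on {1/2..1}" by (rule integrable_on_subinterval[OF iF]) auto
    fix s assume s: "s \<in> {1/2..1::real}"
    have "1 - s \<le> Aa p lam R \<theta> s" using A_lower[OF p K0' th, of s] s by auto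
    then have "0 \<le> Aa p lam R \<theta> s" using s by auto
    then show "0 \<le> f s" unfolding f_def by simp
  qed simp
  have "phi p lam R \<theta> = 2 * integral {0..1} f" unfolding f_def using th by (intro phi_eq) auto
  then show ?thesis using s1 I1 I2 unfolding c_def by simp
qed

lemma phi_upper_small:
  assumes th: "0 \<le> \<theta>" "\<theta> < pi / 2" and c: "cos \<theta> \<le> 1/2"
  shows "phi p lam R \<theta> \<le> 4 * cos \<theta>"
proof -
  define f where "f = (\<lambda>s. 1 / sqrt (Aa p lam R \<theta> s))"
  have iF: "f integrable_on {0..1}" unfolding f_def using F_int(1)[OF p lam R th] .
  have c0: "0 < cos \<theta>" using cos_facts[OF th] by simp
  have I: "integral {0..1} f \<le> (1 - 0) * (2 * cos \<theta>)"
  proof -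
    have "integral {0..1} f \<le> integral {0..1} (\<lambda>_::real. 2 * cos \<theta>)"
    proof (rule Henstock_Kurzweil_Integration.integral_le)
      show "f integrable_on {0..1}" by (rule iF)
      show "(\<lambda>_. 2 * cos \<theta>) integrable_on {0..1::real}" by (rule integrable_const_ivl)
      fix s :: real assume s: "s \<in> {0..1}"
      have "1 / (4 * (cos \<theta>)\<^sup>2) \<le> 1 / (cos \<theta>)\<^sup>2 - 1"
      proof -
        have "(cos \<theta>)\<^sup>2 \<le> (1/2)\<^sup>2" using c c0 by (intro power_mono) auto
        then have "(cos \<theta>)\<^sup>2 \<le> 1/4" by (simp add: power2_eq_square)
        then have "(cos \<theta>)\<^sup>2 * (4 * (cos \<theta>)\<^sup>2) \<le> (cos \<theta>)\<^sup>2 * 3" by (intro mult_left_mono) auto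
        then have "4 * cos \<theta> ^ 4 \<le> 3 * (cos \<theta>)\<^sup>2" by (simp add: power4_eq_xxxx power2_eq_square mult.commute mult.left_commute)
        then have "1 / (4 * (cos \<theta>)\<^sup>2) + 1 \<le> 1 / (cos \<theta>)\<^sup>2" using c0 by (simp add: field_simps)
        then show ?thesis by simp
      qed
      moreover have "1 / (cos \<theta>)\<^sup>2 - 1 \<le> Aa p lam R \<theta> s"
      proof -
        have "s\<^sup>2 \<le> 1" using s by (auto simp: power_le_one)
        then show ?thesis using A_lower(1)[OF p K0' th, of s] s by auto
      qed
      ultimately have le: "1 / (4 * (cos \<theta>)\<^sup>2) \<le> Aa p lam R \<theta> s" by linarith
      have pos: "0 < 1 / (4 * (cos \<theta>)\<^sup>2)" using c0 by simp
      have "sqrt (1 / (4 * (cos \<theta>)\<^sup>2)) \<le> sqrt (Aa p lam R \<theta> s)" using le by simp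
      moreover have "sqrt (1 / (4 * (cos \<theta>)\<^sup>2)) = 1 / (2 * cos \<theta>)"
        using c0 by (simp add: real_sqrt_divide real_sqrt_mult)
      ultimately have "1 / (2 * cos \<theta>) \<le> sqrt (Aa p lam R \<theta> s)" by simp
      moreover have "0 < 1 / (2 * cos \<theta>)" using c0 by simp
      ultimately have sq: "0 < sqrt (Aa p lam R \<theta> s)" by linarith
      have "1 / sqrt (Aa p lam R \<theta> s) \<le> 1 / (1 / (2 * cos \<theta>))"
        by (rule divide_left_mono[OF \<open>1 / (2 * cos \<theta>) \<le> sqrt (Aa p lam R \<theta> s)\<close>]) (use sq c0 in auto)
      then show "f s \<le> 2 * cos \<theta>" unfolding f_def by simp
    qed
    then show ?thesis by simp
  qed
  have "phi p lam R \<theta> = 2 * integral {0..1} f" unfolding f_def using th by (intro phi_eq) auto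
  then show ?thesis using I by simp
qed

lemma phi_upper_left:
  assumes th: "0 \<le> \<theta>" "\<theta> \<le> a" and a: "a < pi / 2"
  shows "phi p lam R \<theta> \<le> 4 / sqrt (Kc p lam R * (cos a) powr (p - 1))"
proof -
  have th': "0 \<le> \<theta>" "\<theta> < pi / 2" using th a by auto
  define k where "k = 1 / sqrt (Kc p lam R * (cos a) powr (p - 1))"
  define f where "f = (\<lambda>s. 1 / sqrt (Aa p lam R \<theta> s))"
  have ca: "0 < cos a" using a th by (intro cos_gt_zero_pi) auto
  have cth: "cos a \<le> cos \<theta>" using th a by (subst cos_mono_le_eq) auto
  have Kp: "Kc p lam R > 0" using Kc_pos[OF p lam R] .
  have Kv: "0 < Kc p lam R * (cos a) powr (p - 1)" using Kp ca by simp
  have iF: "f integrable_on {0..<1}" unfolding f_def using F_int_Ico[OF p lam R th'] .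
  have ih: "(\<lambda>s. k * (1 / sqrt (1 - s))) integrable_on {0..<1}"
    using integrable_on_cmult_left[OF h_int_Ico, of k] by simp
  have "integral {0..<1} f \<le> integral {0..<1} (\<lambda>s. k * (1 / sqrt (1 - s)))"
  proof (rule Henstock_Kurzweil_Integration.integral_le[OF iF ih])
    fix s :: real assume s: "s \<in> {0..<1}"
    have "(cos a) powr (p - 1) \<le> (cos \<theta>) powr (p - 1)" using ca cth p by (intro powr_mono2) auto
    then have "Kc p lam R * (cos a) powr (p - 1) * (1 - s) \<le> Kc p lam R * (cos \<theta>) powr (p - 1) * (1 - s)"
      using Kp s by (intro mult_right_mono mult_left_mono) auto
    also have "\<dots> \<le> Aa p lam R \<theta> s" using A_lower(3)[OF p K0' th', of s] s by auto
    finally have le: "Kc p lam R * (cos a) powr (p - 1) * (1 - s) \<le> Aa p lam R \<theta> s" .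
    have pos: "0 < Kc p lam R * (cos a) powr (p - 1) * (1 - s)" using Kv s by simp
    have "1 / sqrt (Aa p lam R \<theta> s) \<le> 1 / sqrt (Kc p lam R * (cos a) powr (p - 1) * (1 - s))"
      using le pos by (intro divide_left_mono) auto
    also have "\<dots> = k * (1 / sqrt (1 - s))" unfolding k_def by (simp add: real_sqrt_mult)
    finally show "f s \<le> k * (1 / sqrt (1 - s))" unfolding f_def .
  qed
  also have "\<dots> = k * 2"
    using integral_cmul[where c=k and f="\<lambda>s. 1 / sqrt (1 - s)" and S="{0..<1::real}"] h_int_Ico_val by simp
  finally have "integral {0..<1} f \<le> 2 * k" by simp
  moreover have "phi p lam R \<theta> = 2 * integral {0..<1} f"
    unfolding f_def using th' by (subst phi_eq) (auto simp: F_int(2)[OF p lam R th'])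
  ultimately show ?thesis unfolding k_def by simp
qed

end

lemma sqrt_cmp:
  fixes X Y :: real
  assumes Y: "0 < Y" and XY: "16 * Y < X"
  shows "4 / sqrt X < 1 / sqrt Y"
proof -
  have "sqrt (16 * Y) < sqrt X" using XY by simp
  moreover have "sqrt (16 * Y) = 4 * sqrt Y" by (simp add: real_sqrt_mult)
  ultimately have lt: "4 * sqrt Y < sqrt X" by simp
  have sY: "0 < sqrt Y" using Y by simp
  have "4 / sqrt X < 4 / (4 * sqrt Y)"
  proof (rule divide_strict_left_mono[OF lt])
    have sX: "0 < sqrt X" using lt sY by linarith
    show "0 < sqrt X * (4 * sqrt Y)" using sX sY by simp
  qed simp
  then show ?thesis by simp
qed

theorem lemma5p2:
  fixes p lam a b :: real
  assumes "p > 1" and "lam > 0" and "0 < a" and "a < b" and "b < pi / 2"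
  shows "\<exists>Rs>0. \<forall>R>Rs.
           strict_mono_on {a..b} (\<lambda>\<theta>. phi p lam R \<theta>)
         \<and> (\<exists>\<theta>s\<in>{b<..<pi / 2}. \<forall>\<theta>\<in>{0..pi / 2}. phi p lam R \<theta> \<le> phi p lam R \<theta>s)
         \<and> (\<exists>\<theta>m\<in>{0..a}. (\<forall>\<theta>\<in>{0..a}. phi p lam R \<theta>m \<le> phi p lam R \<theta>)
                          \<and> phi p lam R \<theta>m > 0 \<and> 0 = phi p lam R (pi / 2))"
proof -
  note p = assms(1) and lam = assms(2) and a = assms(3) and ab = assms(4) and b = assms(5)
  define q where "q = p - 1"
  have q: "q > 0" unfolding q_def using p by simp
  define v where "v = cos a"
  have v1: "v < 1" unfolding v_def using cos_monotone_0_pi[of 0 a] a ab b by simp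
  have v0: "0 < v" unfolding v_def using a ab b by (intro cos_gt_zero_pi) auto
  have cb: "0 < cos b" using a ab b by (intro cos_gt_zero_pi) auto
  define u where "u = min (cos b / 2) (v / 32 powr (1 / q))"
  have u0: "0 < u" unfolding u_def using cb v0 by simp
  have ucb: "u < cos b" unfolding u_def using cb by simp
  have u12: "u \<le> 1/2" unfolding u_def using cos_le_one[of b] by linarith
  have uq: "u powr q \<le> v powr q / 32"
  proof -
    have "u powr q \<le> (v / 32 powr (1 / q)) powr q"
      unfolding u_def using u0 q by (intro powr_mono2) (auto simp: u_def)
    also have "\<dots> = v powr q / 32" using q by (simp add: powr_divide powr_powr)
    finally show ?thesis .
  qed
  define t0 where "t0 = arccos u"
  have ct0: "cos t0 = u" unfolding t0_def using u0 u12 by simp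
  have t0pi: "t0 < pi / 2" unfolding t0_def using arccos_less_arccos[of 0 u] u0 u12 by simp
  have bt0: "b < t0"
  proof -
    have "arccos (cos b) < arccos u" using arccos_less_arccos[of u "cos b"] u0 ucb by simp
    moreover have "arccos (cos b) = b" using a ab b by (intro arccos_cos) auto
    ultimately show ?thesis unfolding t0_def by simp
  qed
  define M where "M = 2 / ((cos t0)^4 * ((p - 1) * min 1 ((cos t0) powr (p - 1 - 1))))"
  define m where "m = 1 / (cos a)^2 - 1"
  define X where "X = 32 * M^2 / (m * sqrt m)"
  define K0 where "K0 = max 1 (max (4 * M) (max (1 / (cos t0)^2) (max (X^2 + 1) (32 / (u^2 * v powr q) + 1))))"
  have K0: "1 \<le> K0" "4 * M \<le> K0" "1 / (cos t0)^2 \<le> K0" "X^2 + 1 \<le> K0" "32 / (u^2 * v powr q) + 1 \<le> K0"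
    unfolding K0_def by auto
  define Rs where "Rs = (K0 * (lam * (p + 1)) / 2) powr (1 / q)"
  have Rs0: "Rs > 0" unfolding Rs_def using K0(1) lam p by simp
  have RsK: "Rs powr q = K0 * (lam * (p + 1)) / 2"
    unfolding Rs_def using q K0(1) lam p by (simp add: powr_powr)
  show ?thesis
  proof (intro exI[of _ Rs] conjI allI impI Rs0)
    fix R assume RRs: "R > Rs"
    have R: "R > 0" using RRs Rs0 by simp
    define K where "K = Kc p lam R"
    have KK0: "K0 < K"
    proof -
      have "Rs powr q < R powr q" using RRs Rs0 q by (intro powr_less_mono2) auto
      then have "K0 * (lam * (p + 1)) / 2 < R powr q" using RsK by simp
      then have "K0 * (lam * (p + 1)) < 2 * R powr q" by simp
      moreover have "0 < lam * (p + 1)" using lam p by simp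
      ultimately have "K0 < 2 * R powr q / (lam * (p + 1))" by (simp add: pos_less_divide_eq)
      then show ?thesis unfolding K_def Kc_def q_def .
    qed
    have Kp: "K > 0" using KK0 K0(1) by simp
    have sK: "X < sqrt K"
    proof -
      have "X^2 < K" using KK0 K0(4) by simp
      then show ?thesis by (rule real_less_rsqrt)
    qed
    have strict: "phi p lam R x < phi p lam R y" if "a \<le> x" "x < y" "y \<le> t0" for x y
      by (rule phi_strict[OF p lam R a t0pi that])
         (use KK0 K0 sK in \<open>auto simp: K_def M_def m_def X_def\<close>)
    show "strict_mono_on {a..b} (\<lambda>\<theta>. phi p lam R \<theta>)"
      by (rule strict_mono_onI) (use strict bt0 in auto)
    have phi_half: "phi p lam R (pi / 2) = 0" by (simp add: phi_def)
    show "\<exists>\<theta>m\<in>{0..a}. (\<forall>\<theta>\<in>{0..a}. phi p lam R \<theta>m \<le> phi p lam R \<theta>)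
                          \<and> phi p lam R \<theta>m > 0 \<and> 0 = phi p lam R (pi / 2)"
    proof -
      have "continuous_on {0..a} (phi p lam R)" using phi_cont[OF p lam R] ab b by simp
      then obtain tm where tm: "tm \<in> {0..a}" "\<forall>y\<in>{0..a}. phi p lam R tm \<le> phi p lam R y"
        using continuous_attains_inf[of "{0..a}" "phi p lam R"] a by auto
      have th: "0 \<le> tm" "tm < pi / 2" using tm ab b by auto
      have c0: "0 < cos tm" using cos_facts[OF th] by simp
      have "0 < 1 / (cos tm)\<^sup>2 + Kc p lam R * (cos tm) powr (p - 1)"
        using c0 Kp unfolding K_def by (intro add_pos_nonneg) auto
      then have "0 < 1 / sqrt (1 / (cos tm)\<^sup>2 + Kc p lam R * (cos tm) powr (p - 1))" by simp
      then have "phi p lam R tm > 0" using phi_lower[OF p lam R th] by linarith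
      then show ?thesis using tm phi_half by auto
    qed
    show "\<exists>\<theta>s\<in>{b<..<pi / 2}. \<forall>\<theta>\<in>{0..pi / 2}. phi p lam R \<theta> \<le> phi p lam R \<theta>s"
    proof -
      define B0 where "B0 = 1 / u^2 + K * u powr q"
      have B0p: "0 < B0" unfolding B0_def using u0 Kp by (intro add_pos_nonneg) auto
      have t00: "0 \<le> t0" using bt0 a ab by simp
      have L0: "1 / sqrt B0 \<le> phi p lam R t0"
        using phi_lower[OF p lam R t00 t0pi] unfolding B0_def K_def q_def ct0 .
      have vq: "0 < v powr q" using v0 by simp
      have left: "phi p lam R \<theta> < phi p lam R t0" if "0 \<le> \<theta>" "\<theta> \<le> a" for \<theta>
      proof -
        have "phi p lam R \<theta> \<le> 4 / sqrt (K * v powr q)"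
          using phi_upper_left[OF p lam R that] ab b unfolding K_def v_def q_def by simp
        also have "\<dots> < 1 / sqrt B0"
        proof (rule sqrt_cmp[OF B0p])
          have "32 / (u^2 * v powr q) < K" using KK0 K0(5) by simp
          then have "32 < K * (u^2 * v powr q)" using u0 vq by (simp add: divide_less_eq)
          then have A: "16 / u^2 < K * v powr q / 2" using u0 by (simp add: field_simps)
          have "K * u powr q \<le> K * (v powr q / 32)" using uq Kp by (intro mult_left_mono) auto
          then show "16 * B0 < K * v powr q" unfolding B0_def using A by (simp add: algebra_simps)
        qed
        finally show ?thesis using L0 by simp
      qed
      have below: "phi p lam R \<theta> < phi p lam R t0" if "0 \<le> \<theta>" "\<theta> \<le> b" for \<theta>
      proof (cases "\<theta> \<le> a")
        case True then show ?thesis using left that by simp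
      next
        case False then show ?thesis using strict[of \<theta> t0] that bt0 by simp
      qed
      have "0 < 1 / sqrt B0" using B0p by simp
      then have pt0: "0 < phi p lam R t0" using L0 by linarith
      define w where "w = min u (phi p lam R t0 / 8)"
      have w0: "0 < w" unfolding w_def using u0 pt0 by simp
      have wu: "w \<le> u" unfolding w_def by simp
      define t1 where "t1 = arccos w"
      have ct1: "cos t1 = w" unfolding t1_def using w0 wu u12 by simp
      have t1pi: "t1 < pi / 2" unfolding t1_def using arccos_less_arccos[of 0 w] w0 wu u12 by simp
      have t01: "t0 \<le> t1" unfolding t0_def t1_def using arccos_le_arccos[of w u] w0 wu u12 by simp
      have "continuous_on {0..t1} (phi p lam R)" using phi_cont[OF p lam R t1pi] .
      then obtain ts where ts: "ts \<in> {0..t1}" "\<forall>y\<in>{0..t1}. phi p lam R y \<le> phi p lam R ts"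
        using continuous_attains_sup[of "{0..t1}" "phi p lam R"] t01 t00 by auto
      have ge: "phi p lam R t0 \<le> phi p lam R ts" using ts t01 t00 by auto
      have tsb: "b < ts"
      proof (rule ccontr)
        assume "\<not> b < ts"
        then have "phi p lam R ts < phi p lam R t0" using below[of ts] ts by auto
        then show False using ge by simp
      qed
      have tspi: "ts < pi / 2" using ts t1pi by auto
      have all: "phi p lam R \<theta> \<le> phi p lam R ts" if th: "\<theta> \<in> {0..pi/2}" for \<theta>
      proof -
        consider "\<theta> \<le> t1" | "t1 < \<theta>" "\<theta> < pi / 2" | "\<theta> = pi / 2" using th by fastforce
        then show ?thesis
        proof cases
          case 1 then show ?thesis using ts th by auto
        next
          case 2
          have th0: "0 \<le> \<theta>" using 2 t01 t00 by simp
          have "cos \<theta> \<le> cos t1" using 2 t01 t00 by (subst cos_mono_le_eq) auto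
          then have cw: "cos \<theta> \<le> w" using ct1 by simp
          then have "cos \<theta> \<le> 1/2" using wu u12 by simp
          then have "phi p lam R \<theta> \<le> 4 * cos \<theta>" using phi_upper_small[OF p lam R th0 2(2)] by simp
          also have "\<dots> \<le> 4 * w" using cw by simp
          also have "\<dots> \<le> phi p lam R t0 / 2" unfolding w_def by simp
          finally show ?thesis using ge pt0 by simp
        next
          case 3
          then have "phi p lam R \<theta> = phi p lam R (pi / 2)" by (rule arg_cong)
          then have "phi p lam R \<theta> = 0" using phi_half by simp
          then show ?thesis using ge pt0 by simp
        qed
      qed
      have "ts \<in> {b<..<pi / 2}" using tsb tspi by simp
      then show ?thesis using all by blast
    qed
  qed
qed

end
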